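(* Let $\mathcal{C}$, $Q$, $A_0$, $x_0$ be as in the context (conditions (1Q), (2Q)), and let $\Phi$ be an automorphism of $\mathcal{C}$. Suppose $(t_A:Q(A)\to Q(\Phi(A)))_{A\in\mathrm{Ob}\,\mathcal{C}}$ is a family of $\mathcal{C}$-bijections such that $Q(\Phi(\mu))\circ t_A=t_B\circ Q(\mu)$ for every morphism $\mu:A\to B$. Then there exists a central function $(d_A)_{A\in\mathrm{Ob}\,\mathcal{C}}$ such that for every object $A$, $$t_A=\big(c^{\Phi^{-1}}_{\Phi(A)}\big)^{-1}\circ s^{\Phi}_A\circ d_A,$$ where $c^{\Phi^{-1}}_{\Phi(A)}=s^{\Phi}_{A}\circ s^{\Phi^{-1}}_{\Phi(A)}:Q(\Phi(A))\to Q(\Phi(A))$ and $\big(c^{\Phi^{-1}}_{\Phi(A)}\big)^{-1}$ denotes the inverse of this injective map on its image.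
   Context: (1Q): for every object $A$ and every $a\in Q(A)$ there is exactly one morphism $\alpha^A_a:A_0\to A$ with $Q(\alpha^A_a)(x_0)=a$. (2Q): for every object $A$ there is a morphism $A\to A_0$ whose image under $Q$ is surjective. $Q$ is faithful. A $\mathcal{C}$-bijection $s:Q(A)\to Q(B)$ is an injective map such that for all morphisms $\alpha_1,\alpha_2:B\to C$, $Q(\alpha_1)\circ s=Q(\alpha_2)\circ s$ implies $\alpha_1=\alpha_2$. A central function is a family of $\mathcal{C}$-bijections $d_A:Q(A)\to Q(A)$ with $d_B\circ Q(\mu)=Q(\mu)\circ d_A$ for all morphisms $\mu:A\to B$. Main function: for an automorphism $\Psi$ of $\mathcal{C}$ fix a morphism $\eta^{\Psi}_0:\Psi^{-1}(A_0)\to A_0$ with $Q(\eta^\Psi_0)$ surjective (taken to be the identity if $\Psi(A_0)=A_0$), put $\eta^\Psi=\Psi(\eta^\Psi_0):A_0\to\Psi(A_0)$, and define $s^\Psi_A:Q(A)\to Q(\Psi(A))$ by $s^\Psi_A(a)=Q(\Psi(\alpha^A_a)\circ\eta^\Psi)(x_0)$. This is applied with $\Psi=\Phi$ and $\Psi=\Phi^{-1}$. *)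

theory Defs
  imports Main
begin

text \<open>A (small-style) category given by explicit object and morphism carriers.
  Cmp C g f is the composite g after f.\<close>
record ('o,'m) cat =
  Ob  :: "'o set"
  Mor :: "'m set"
  Dom :: "'m \<Rightarrow> 'o"
  Cod :: "'m \<Rightarrow> 'o"
  Cmp :: "'m \<Rightarrow> 'm \<Rightarrow> 'm"
  Idm :: "'o \<Rightarrow> 'm"

definition hom :: "('o,'m) cat \<Rightarrow> 'o \<Rightarrow> 'o \<Rightarrow> 'm set" where
  "hom C A B = {f \<in> Mor C. Dom C f = A \<and> Cod C f = B}"

definition is_category :: "('o,'m) cat \<Rightarrow> bool" where
  "is_category C \<longleftrightarrow>
     (\<forall>f \<in> Mor C. Dom C f \<in> Ob C \<and> Cod C f \<in> Ob C)
   \<and> (\<forall>A \<in> Ob C. Idm C A \<in> hom C A A)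
   \<and> (\<forall>A B D f g. f \<in> hom C A B \<longrightarrow> g \<in> hom C B D \<longrightarrow> Cmp C g f \<in> hom C A D)
   \<and> (\<forall>A B D E f g h. f \<in> hom C A B \<longrightarrow> g \<in> hom C B D \<longrightarrow> h \<in> hom C D E \<longrightarrow>
        Cmp C h (Cmp C g f) = Cmp C (Cmp C h g) f)
   \<and> (\<forall>A B f. f \<in> hom C A B \<longrightarrow> Cmp C f (Idm C A) = f \<and> Cmp C (Idm C B) f = f)"

definition is_endofunctor :: "('o,'m) cat \<Rightarrow> ('o \<Rightarrow> 'o) \<Rightarrow> ('m \<Rightarrow> 'm) \<Rightarrow> bool" where
  "is_endofunctor C Fo Fm \<longleftrightarrow>
     (\<forall>A \<in> Ob C. Fo A \<in> Ob C)
   \<and> (\<forall>A B f. f \<in> hom C A B \<longrightarrow> Fm f \<in> hom C (Fo A) (Fo B))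
   \<and> (\<forall>A \<in> Ob C. Fm (Idm C A) = Idm C (Fo A))
   \<and> (\<forall>A B D f g. f \<in> hom C A B \<longrightarrow> g \<in> hom C B D \<longrightarrow>
        Fm (Cmp C g f) = Cmp C (Fm g) (Fm f))"

text \<open>An automorphism of the category: a functor bijective on objects and on morphisms
  (its inverse is then automatically a functor).\<close>
definition is_automorphism :: "('o,'m) cat \<Rightarrow> ('o \<Rightarrow> 'o) \<Rightarrow> ('m \<Rightarrow> 'm) \<Rightarrow> bool" where
  "is_automorphism C Fo Fm \<longleftrightarrow>
     is_endofunctor C Fo Fm \<and> bij_betw Fo (Ob C) (Ob C) \<and> bij_betw Fm (Mor C) (Mor C)"

text \<open>A (covariant) set-valued functor Q: Qo A is the set Q(A), Qm f the map Q(f)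
  (only its values on Q(dom f) matter).\<close>
definition is_set_functor :: "('o,'m) cat \<Rightarrow> ('o \<Rightarrow> 'x set) \<Rightarrow> ('m \<Rightarrow> 'x \<Rightarrow> 'x) \<Rightarrow> bool" where
  "is_set_functor C Qo Qm \<longleftrightarrow>
     (\<forall>A B f. f \<in> hom C A B \<longrightarrow> Qm f ` Qo A \<subseteq> Qo B)
   \<and> (\<forall>A \<in> Ob C. \<forall>x \<in> Qo A. Qm (Idm C A) x = x)
   \<and> (\<forall>A B D f g. f \<in> hom C A B \<longrightarrow> g \<in> hom C B D \<longrightarrow>
        (\<forall>x \<in> Qo A. Qm (Cmp C g f) x = Qm g (Qm f x)))"

definition faithful :: "('o,'m) cat \<Rightarrow> ('o \<Rightarrow> 'x set) \<Rightarrow> ('m \<Rightarrow> 'x \<Rightarrow> 'x) \<Rightarrow> bool" where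
  "faithful C Qo Qm \<longleftrightarrow>
     (\<forall>A B f g. f \<in> hom C A B \<longrightarrow> g \<in> hom C A B \<longrightarrow> (\<forall>x \<in> Qo A. Qm f x = Qm g x) \<longrightarrow> f = g)"

definition cond_1Q :: "('o,'m) cat \<Rightarrow> ('o \<Rightarrow> 'x set) \<Rightarrow> ('m \<Rightarrow> 'x \<Rightarrow> 'x) \<Rightarrow> 'o \<Rightarrow> 'x \<Rightarrow> bool" where
  "cond_1Q C Qo Qm A0 x0 \<longleftrightarrow>
     (\<forall>A \<in> Ob C. \<forall>a \<in> Qo A. \<exists>!\<alpha>. \<alpha> \<in> hom C A0 A \<and> Qm \<alpha> x0 = a)"

definition cond_2Q :: "('o,'m) cat \<Rightarrow> ('o \<Rightarrow> 'x set) \<Rightarrow> ('m \<Rightarrow> 'x \<Rightarrow> 'x) \<Rightarrow> 'o \<Rightarrow> bool" where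
  "cond_2Q C Qo Qm A0 \<longleftrightarrow>
     (\<forall>A \<in> Ob C. \<exists>f \<in> hom C A A0. Qm f ` Qo A = Qo A0)"

definition alpha :: "('o,'m) cat \<Rightarrow> ('m \<Rightarrow> 'x \<Rightarrow> 'x) \<Rightarrow> 'o \<Rightarrow> 'x \<Rightarrow> 'o \<Rightarrow> 'x \<Rightarrow> 'm" where
  "alpha C Qm A0 x0 A a = (THE \<alpha>. \<alpha> \<in> hom C A0 A \<and> Qm \<alpha> x0 = a)"

definition C_bijection :: "('o,'m) cat \<Rightarrow> ('o \<Rightarrow> 'x set) \<Rightarrow> ('m \<Rightarrow> 'x \<Rightarrow> 'x) \<Rightarrow>
    'o \<Rightarrow> 'o \<Rightarrow> ('x \<Rightarrow> 'x) \<Rightarrow> bool" where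
  "C_bijection C Qo Qm A B s \<longleftrightarrow>
     s ` Qo A \<subseteq> Qo B \<and> inj_on s (Qo A)
   \<and> (\<forall>D \<alpha>1 \<alpha>2. \<alpha>1 \<in> hom C B D \<longrightarrow> \<alpha>2 \<in> hom C B D \<longrightarrow>
        (\<forall>x \<in> Qo A. Qm \<alpha>1 (s x) = Qm \<alpha>2 (s x)) \<longrightarrow> \<alpha>1 = \<alpha>2)"

definition central_function :: "('o,'m) cat \<Rightarrow> ('o \<Rightarrow> 'x set) \<Rightarrow> ('m \<Rightarrow> 'x \<Rightarrow> 'x) \<Rightarrow>
    ('o \<Rightarrow> 'x \<Rightarrow> 'x) \<Rightarrow> bool" where
  "central_function C Qo Qm d \<longleftrightarrow>
     (\<forall>A \<in> Ob C. C_bijection C Qo Qm A A (d A))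
   \<and> (\<forall>A B \<mu>. \<mu> \<in> hom C A B \<longrightarrow> (\<forall>x \<in> Qo A. d B (Qm \<mu> x) = Qm \<mu> (d A x)))"

text \<open>Admissible choice of eta^Psi_0 for an automorphism Psi (object map Psio, inverse object
  map Psiinvo): a morphism Psi^{-1}(A0) -> A0 with surjective Q-image, the identity if
  Psi(A0) = A0.\<close>
definition eta0_ok :: "('o,'m) cat \<Rightarrow> ('o \<Rightarrow> 'x set) \<Rightarrow> ('m \<Rightarrow> 'x \<Rightarrow> 'x) \<Rightarrow> 'o \<Rightarrow>
    ('o \<Rightarrow> 'o) \<Rightarrow> ('o \<Rightarrow> 'o) \<Rightarrow> 'm \<Rightarrow> bool" where
  "eta0_ok C Qo Qm A0 Psio Psiinvo eta0 \<longleftrightarrow>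
     eta0 \<in> hom C (Psiinvo A0) A0
   \<and> Qm eta0 ` Qo (Psiinvo A0) = Qo A0
   \<and> (Psio A0 = A0 \<longrightarrow> eta0 = Idm C A0)"

definition main_fun :: "('o,'m) cat \<Rightarrow> ('m \<Rightarrow> 'x \<Rightarrow> 'x) \<Rightarrow> 'o \<Rightarrow> 'x \<Rightarrow>
    ('m \<Rightarrow> 'm) \<Rightarrow> 'm \<Rightarrow> 'o \<Rightarrow> 'x \<Rightarrow> 'x" where
  "main_fun C Qm A0 x0 Psim eta0 A a =
     Qm (Cmp C (Psim (alpha C Qm A0 x0 A a)) (Psim eta0)) x0"

end

theory Submission
  imports Defs
begin

lemma cat_facts:
  assumes "is_category C"
  shows "\<And>f. f \<in> Mor C \<Longrightarrow> Dom C f \<in> Ob C \<and> Cod C f \<in> Ob C"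
    and "\<And>A B D f g. f \<in> hom C A B \<Longrightarrow> g \<in> hom C B D \<Longrightarrow> Cmp C g f \<in> hom C A D"
    and "\<And>A B D E f g h. f \<in> hom C A B \<Longrightarrow> g \<in> hom C B D \<Longrightarrow> h \<in> hom C D E \<Longrightarrow>
        Cmp C h (Cmp C g f) = Cmp C (Cmp C h g) f"
  using assms unfolding is_category_def by blast+

lemma hom_ob: "is_category C \<Longrightarrow> f \<in> hom C A B \<Longrightarrow> A \<in> Ob C \<and> B \<in> Ob C"
  unfolding hom_def using cat_facts(1) by (metis (mono_tags, lifting) mem_Collect_eq)

lemma faithD: "faithful C Qo Qm \<Longrightarrow> f \<in> hom C A B \<Longrightarrow> g \<in> hom C A B \<Longrightarrow> (\<And>x. x \<in> Qo A \<Longrightarrow> Qm f x = Qm g x) \<Longrightarrow> f = g"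
  unfolding faithful_def by blast

lemma alpha_prop:
  assumes "cond_1Q C Qo Qm A0 x0" "A \<in> Ob C" "a \<in> Qo A"
  shows "alpha C Qm A0 x0 A a \<in> hom C A0 A \<and> Qm (alpha C Qm A0 x0 A a) x0 = a"
proof -
  have "\<exists>!\<alpha>. \<alpha> \<in> hom C A0 A \<and> Qm \<alpha> x0 = a" using assms unfolding cond_1Q_def by blast
  then show ?thesis unfolding alpha_def by (rule theI')
qed

lemma alpha_unique:
  assumes "cond_1Q C Qo Qm A0 x0" "A \<in> Ob C" "a \<in> Qo A" "\<alpha> \<in> hom C A0 A" "Qm \<alpha> x0 = a"
  shows "alpha C Qm A0 x0 A a = \<alpha>"
proof -
  have "\<exists>!\<alpha>. \<alpha> \<in> hom C A0 A \<and> Qm \<alpha> x0 = a" using assms unfolding cond_1Q_def by blast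
  then show ?thesis unfolding alpha_def using assms by (blast intro: the1_equality)
qed

locale spsi =
  fixes C :: "('o,'m) cat" and Qo :: "'o \<Rightarrow> 'x set" and Qm :: "'m \<Rightarrow> 'x \<Rightarrow> 'x"
    and A0 :: 'o and x0 :: 'x and Po :: "'o \<Rightarrow> 'o" and Pm :: "'m \<Rightarrow> 'm"
    and B0 :: 'o and eta0 :: 'm
  assumes cat: "is_category C"
    and Q: "is_set_functor C Qo Qm"
    and faith: "faithful C Qo Qm"
    and A0: "A0 \<in> Ob C" and x0: "x0 \<in> Qo A0"
    and Q1: "cond_1Q C Qo Qm A0 x0"
    and Pmap: "\<And>A B f. f \<in> hom C A B \<Longrightarrow> Pm f \<in> hom C (Po A) (Po B)"
    and Pcmp: "\<And>A B D f g. f \<in> hom C A B \<Longrightarrow> g \<in> hom C B D \<Longrightarrow>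
        Pm (Cmp C g f) = Cmp C (Pm g) (Pm f)"
    and Pinj: "inj_on Pm (Mor C)"
    and eta: "eta0 \<in> hom C B0 A0" and etasurj: "Qm eta0 ` Qo B0 = Qo A0"
    and PB0: "Po B0 = A0"
begin

abbreviation "s \<equiv> main_fun C Qm A0 x0 Pm eta0"

lemma Qimg: "f \<in> hom C A B \<Longrightarrow> x \<in> Qo A \<Longrightarrow> Qm f x \<in> Qo B"
  using Q unfolding is_set_functor_def by blast

lemma Qcmp: "f \<in> hom C A B \<Longrightarrow> g \<in> hom C B D \<Longrightarrow> x \<in> Qo A \<Longrightarrow> Qm (Cmp C g f) x = Qm g (Qm f x)"
  using Q unfolding is_set_functor_def by blast

lemma Peta: "Pm eta0 \<in> hom C A0 (Po A0)"
  using Pmap[OF eta] PB0 by simp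

lemma s_hom:
  assumes "A \<in> Ob C" "a \<in> Qo A"
  shows "Cmp C (Pm (alpha C Qm A0 x0 A a)) (Pm eta0) \<in> hom C A0 (Po A)"
  by (rule cat_facts(2)[OF cat Peta Pmap[OF conjunct1[OF alpha_prop[OF Q1 assms]]]])

lemma s_in:
  assumes "A \<in> Ob C" "a \<in> Qo A"
  shows "s A a \<in> Qo (Po A)"
  unfolding main_fun_def by (rule Qimg[OF s_hom[OF assms] x0])

lemma s_inj:
  assumes "A \<in> Ob C"
  shows "inj_on (s A) (Qo A)"
proof (rule inj_onI)
  fix a a' assume a: "a \<in> Qo A" and a': "a' \<in> Qo A" and eq: "s A a = s A a'"
  let ?al = "alpha C Qm A0 x0 A a" and ?al' = "alpha C Qm A0 x0 A a'"
  have h: "?al \<in> hom C A0 A" "Qm ?al x0 = a" using alpha_prop[OF Q1 assms a] by auto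
  have h': "?al' \<in> hom C A0 A" "Qm ?al' x0 = a'" using alpha_prop[OF Q1 assms a'] by auto
  have PA: "Po A \<in> Ob C" using hom_ob[OF cat s_hom[OF assms a]] by blast
  have "Cmp C (Pm ?al) (Pm eta0) = Cmp C (Pm ?al') (Pm eta0)"
  proof -
    have "Cmp C (Pm ?al) (Pm eta0) = alpha C Qm A0 x0 (Po A) (s A a)"
      by (rule alpha_unique[OF Q1 PA s_in[OF assms a] s_hom[OF assms a], symmetric])
         (simp add: main_fun_def)
    also have "\<dots> = Cmp C (Pm ?al') (Pm eta0)"
      unfolding eq
      by (rule alpha_unique[OF Q1 PA s_in[OF assms a'] s_hom[OF assms a']])
         (simp add: main_fun_def)
    finally show ?thesis .
  qed
  then have "Pm (Cmp C ?al eta0) = Pm (Cmp C ?al' eta0)"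
    unfolding Pcmp[OF eta h(1)] Pcmp[OF eta h'(1)] .
  moreover have "Cmp C ?al eta0 \<in> hom C B0 A" "Cmp C ?al' eta0 \<in> hom C B0 A"
    by (rule cat_facts(2)[OF cat eta h(1)], rule cat_facts(2)[OF cat eta h'(1)])
  ultimately have ce: "Cmp C ?al eta0 = Cmp C ?al' eta0"
  proof -
    assume m: "Pm (Cmp C ?al eta0) = Pm (Cmp C ?al' eta0)" "Cmp C ?al eta0 \<in> hom C B0 A" "Cmp C ?al' eta0 \<in> hom C B0 A"
    show ?thesis by (rule inj_onD[OF Pinj m(1)]) (use m(2,3) in \<open>auto simp: hom_def\<close>)
  qed
  have "\<forall>y \<in> Qo A0. Qm ?al y = Qm ?al' y"
  proof
    fix y assume "y \<in> Qo A0"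
    then obtain z where z: "z \<in> Qo B0" "y = Qm eta0 z" using etasurj by blast
    have "Qm ?al y = Qm (Cmp C ?al eta0) z" using Qcmp[OF eta h(1) z(1)] z(2) by simp
    also have "\<dots> = Qm (Cmp C ?al' eta0) z" using ce by (rule arg_cong)
    also have "\<dots> = Qm ?al' y" using Qcmp[OF eta h'(1) z(1)] z(2) by simp
    finally show "Qm ?al y = Qm ?al' y" .
  qed
  then have "?al = ?al'" using faithD[OF faith h(1) h'(1)] by blast
  then show "a = a'" using h(2) h'(2) by metis
qed

lemma s_nat:
  assumes mu: "\<mu> \<in> hom C A B" and a: "a \<in> Qo A"
  shows "s B (Qm \<mu> a) = Qm (Pm \<mu>) (s A a)"
proof -
  have AB: "A \<in> Ob C" "B \<in> Ob C" using hom_ob[OF cat mu] by auto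
  let ?al = "alpha C Qm A0 x0 A a"
  have h: "?al \<in> hom C A0 A" "Qm ?al x0 = a" using alpha_prop[OF Q1 AB(1) a] by auto
  have b: "Qm \<mu> a \<in> Qo B" using Qimg[OF mu a] .
  have "alpha C Qm A0 x0 B (Qm \<mu> a) = Cmp C \<mu> ?al"
    apply (rule alpha_unique[OF Q1 AB(2) b])
    using cat_facts(2)[OF cat h(1) mu] apply blast
    using Qcmp[OF h(1) mu x0] h(2) by simp
  then have "s B (Qm \<mu> a) = Qm (Cmp C (Cmp C (Pm \<mu>) (Pm ?al)) (Pm eta0)) x0"
    unfolding main_fun_def using Pcmp[OF h(1) mu] by simp
  also have "\<dots> = Qm (Cmp C (Pm \<mu>) (Cmp C (Pm ?al) (Pm eta0))) x0"
    using cat_facts(3)[OF cat Peta Pmap[OF h(1)] Pmap[OF mu]] by simp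
  also have "\<dots> = Qm (Pm \<mu>) (s A a)"
    unfolding main_fun_def
    using Qcmp[OF s_hom[OF AB(1) a] Pmap[OF mu] x0] by simp
  finally show ?thesis .
qed

end

lemma auto_facts:
  assumes cat: "is_category C" and Phi: "is_automorphism C Phio Phim"
  defines "Pi \<equiv> inv_into (Ob C) Phio" and "Mi \<equiv> inv_into (Mor C) Phim"
  shows "\<And>A B f. f \<in> hom C A B \<Longrightarrow> Phim f \<in> hom C (Phio A) (Phio B)"
    and "\<And>A B D f g. f \<in> hom C A B \<Longrightarrow> g \<in> hom C B D \<Longrightarrow>
        Phim (Cmp C g f) = Cmp C (Phim g) (Phim f)"
    and "inj_on Phim (Mor C)"
    and "\<And>A. A \<in> Ob C \<Longrightarrow> Phio A \<in> Ob C"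
    and "\<And>A. A \<in> Ob C \<Longrightarrow> Pi (Phio A) = A"
    and "\<And>A. A \<in> Ob C \<Longrightarrow> Phio (Pi A) = A"
    and "\<And>A. A \<in> Ob C \<Longrightarrow> Pi A \<in> Ob C"
    and "\<And>f. f \<in> Mor C \<Longrightarrow> Mi (Phim f) = f"
    and "\<And>A B f. f \<in> hom C A B \<Longrightarrow> Mi f \<in> hom C (Pi A) (Pi B)"
    and "\<And>A B D f g. f \<in> hom C A B \<Longrightarrow> g \<in> hom C B D \<Longrightarrow>
        Mi (Cmp C g f) = Cmp C (Mi g) (Mi f)"
    and "inj_on Mi (Mor C)"
proof -
  have F: "is_endofunctor C Phio Phim" and bo: "bij_betw Phio (Ob C) (Ob C)"
    and bm: "bij_betw Phim (Mor C) (Mor C)"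
    using Phi unfolding is_automorphism_def by auto
  show P1: "\<And>A B f. f \<in> hom C A B \<Longrightarrow> Phim f \<in> hom C (Phio A) (Phio B)"
    using F unfolding is_endofunctor_def by blast
  show P2: "\<And>A B D f g. f \<in> hom C A B \<Longrightarrow> g \<in> hom C B D \<Longrightarrow>
        Phim (Cmp C g f) = Cmp C (Phim g) (Phim f)"
    using F unfolding is_endofunctor_def by blast
  show P3: "inj_on Phim (Mor C)" using bm bij_betw_imp_inj_on by blast
  show P4: "\<And>A. A \<in> Ob C \<Longrightarrow> Phio A \<in> Ob C" using F unfolding is_endofunctor_def by blast
  have io: "inj_on Phio (Ob C)" using bo bij_betw_imp_inj_on by blast
  show P5: "\<And>A. A \<in> Ob C \<Longrightarrow> Pi (Phio A) = A" unfolding Pi_def using io by (simp add: inv_into_f_f)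
  show P6: "\<And>A. A \<in> Ob C \<Longrightarrow> Phio (Pi A) = A" unfolding Pi_def using bo
    by (metis bij_betw_imp_surj_on f_inv_into_f)
  show P7: "\<And>A. A \<in> Ob C \<Longrightarrow> Pi A \<in> Ob C" unfolding Pi_def using bo
    by (metis bij_betw_imp_surj_on inv_into_into)
  show P8: "\<And>f. f \<in> Mor C \<Longrightarrow> Mi (Phim f) = f" unfolding Mi_def using P3 by (simp add: inv_into_f_f)
  have P8': "\<And>g. g \<in> Mor C \<Longrightarrow> Phim (Mi g) = g \<and> Mi g \<in> Mor C" unfolding Mi_def using bm
    by (metis bij_betw_imp_surj_on f_inv_into_f inv_into_into)
  show P9: "\<And>A B f. f \<in> hom C A B \<Longrightarrow> Mi f \<in> hom C (Pi A) (Pi B)"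
  proof -
    fix A B f assume f: "f \<in> hom C A B"
    then have fm: "f \<in> Mor C" unfolding hom_def by auto
    let ?g = "Mi f"
    have g: "Phim ?g = f" "?g \<in> Mor C" using P8'[OF fm] by auto
    have gh: "?g \<in> hom C (Dom C ?g) (Cod C ?g)" using g unfolding hom_def by auto
    have ob: "Dom C ?g \<in> Ob C" "Cod C ?g \<in> Ob C" using hom_ob[OF cat gh] by auto
    have "f \<in> hom C (Phio (Dom C ?g)) (Phio (Cod C ?g))" using P1[OF gh] g by simp
    then have "A = Phio (Dom C ?g)" "B = Phio (Cod C ?g)" using f unfolding hom_def by auto
    then show "Mi f \<in> hom C (Pi A) (Pi B)" using P5 ob gh by simp
  qed
  show P10: "\<And>A B D f g. f \<in> hom C A B \<Longrightarrow> g \<in> hom C B D \<Longrightarrow>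
        Mi (Cmp C g f) = Cmp C (Mi g) (Mi f)"
  proof -
    fix A B D f g assume f: "f \<in> hom C A B" and g: "g \<in> hom C B D"
    have hf: "Mi f \<in> hom C (Pi A) (Pi B)" and hg: "Mi g \<in> hom C (Pi B) (Pi D)"
      using P9 f g by auto
    have c: "Cmp C (Mi g) (Mi f) \<in> hom C (Pi A) (Pi D)" using cat_facts(2)[OF cat hf hg] .
    have "Phim (Cmp C (Mi g) (Mi f)) = Cmp C (Phim (Mi g)) (Phim (Mi f))" using P2[OF hf hg] .
    also have "\<dots> = Cmp C g f" using P8' f g unfolding hom_def by auto
    finally have "Mi (Cmp C g f) = Mi (Phim (Cmp C (Mi g) (Mi f)))" by simp
    also have "\<dots> = Cmp C (Mi g) (Mi f)" using P8 c unfolding hom_def by auto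
    finally show "Mi (Cmp C g f) = Cmp C (Mi g) (Mi f)" .
  qed
  show "inj_on Mi (Mor C)" unfolding Mi_def using bm
    by (metis bij_betw_imp_inj_on bij_betw_inv_into)
qed

theorem proposition1:
  fixes C :: "('o,'m) cat" and Qo :: "'o \<Rightarrow> 'x set" and Qm :: "'m \<Rightarrow> 'x \<Rightarrow> 'x"
    and A0 :: 'o and x0 :: 'x
    and Phio :: "'o \<Rightarrow> 'o" and Phim :: "'m \<Rightarrow> 'm"
    and t :: "'o \<Rightarrow> 'x \<Rightarrow> 'x"
    and eta0P :: 'm and eta0I :: 'm
  assumes cat: "is_category C"
    and Q: "is_set_functor C Qo Qm"
    and faith: "faithful C Qo Qm"
    and A0: "A0 \<in> Ob C" and x0: "x0 \<in> Qo A0"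
    and Q1: "cond_1Q C Qo Qm A0 x0"
    and Q2: "cond_2Q C Qo Qm A0"
    and Phi: "is_automorphism C Phio Phim"
    and etaP: "eta0_ok C Qo Qm A0 Phio (inv_into (Ob C) Phio) eta0P"
    and etaI: "eta0_ok C Qo Qm A0 (inv_into (Ob C) Phio) Phio eta0I"
    and t_bij: "\<forall>A \<in> Ob C. C_bijection C Qo Qm A (Phio A) (t A)"
    and t_nat: "\<forall>A B \<mu>. \<mu> \<in> hom C A B \<longrightarrow>
                  (\<forall>x \<in> Qo A. Qm (Phim \<mu>) (t A x) = t B (Qm \<mu> x))"
  shows "\<exists>d. central_function C Qo Qm d \<and>
    (\<forall>A \<in> Ob C.
       let sP = main_fun C Qm A0 x0 Phim eta0P A;
           sI = main_fun C Qm A0 x0 (inv_into (Mor C) Phim) eta0I (Phio A);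
           c = sP \<circ> sI
       in \<forall>x \<in> Qo A. sP (d A x) \<in> c ` Qo (Phio A)
                   \<and> t A x = inv_into (Qo (Phio A)) c (sP (d A x)))"
proof -
  define Pi where "Pi = inv_into (Ob C) Phio"
  define Mi where "Mi = inv_into (Mor C) Phim"
  note AF = auto_facts[OF cat Phi, folded Pi_def Mi_def]
  have eP: "eta0P \<in> hom C (Pi A0) A0" "Qm eta0P ` Qo (Pi A0) = Qo A0"
    using etaP unfolding eta0_ok_def Pi_def by auto
  have eI: "eta0I \<in> hom C (Phio A0) A0" "Qm eta0I ` Qo (Phio A0) = Qo A0"
    using etaI unfolding eta0_ok_def by auto
  interpret P: spsi C Qo Qm A0 x0 Phio Phim "Pi A0" eta0P
    by (unfold_locales; (rule cat Q faith A0 x0 Q1 eP AF(3))?; (erule AF(1))?;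
        (erule (1) AF(2))?; (rule AF(6)[OF A0])?)
  interpret I: spsi C Qo Qm A0 x0 Pi Mi "Phio A0" eta0I
    by (unfold_locales; (rule cat Q faith A0 x0 Q1 eI AF(11))?; (erule AF(9))?;
        (erule (1) AF(10))?; (rule AF(5)[OF A0])?)
  define d where "d = (\<lambda>A x. I.s (Phio A) (t A x))"
  have tin: "\<And>A x. A \<in> Ob C \<Longrightarrow> x \<in> Qo A \<Longrightarrow> t A x \<in> Qo (Phio A)"
    using t_bij unfolding C_bijection_def by blast
  have tinj: "\<And>A. A \<in> Ob C \<Longrightarrow> inj_on (t A) (Qo A)"
    using t_bij unfolding C_bijection_def by blast
  have tepi: "\<And>A D a1 a2. A \<in> Ob C \<Longrightarrow> a1 \<in> hom C (Phio A) D \<Longrightarrow> a2 \<in> hom C (Phio A) D \<Longrightarrow>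
        (\<And>x. x \<in> Qo A \<Longrightarrow> Qm a1 (t A x) = Qm a2 (t A x)) \<Longrightarrow> a1 = a2"
    using t_bij unfolding C_bijection_def by blast
  have sIin: "\<And>A y. A \<in> Ob C \<Longrightarrow> y \<in> Qo (Phio A) \<Longrightarrow> I.s (Phio A) y \<in> Qo A"
    using I.s_in AF(4) AF(5) by metis
  have dnat: "\<And>A B \<mu> x. \<mu> \<in> hom C A B \<Longrightarrow> x \<in> Qo A \<Longrightarrow> d B (Qm \<mu> x) = Qm \<mu> (d A x)"
  proof -
    fix A B \<mu> x assume mu: "\<mu> \<in> hom C A B" and x: "x \<in> Qo A"
    have AB: "A \<in> Ob C" "B \<in> Ob C" using hom_ob[OF cat mu] by auto
    have "d B (Qm \<mu> x) = I.s (Phio B) (Qm (Phim \<mu>) (t A x))"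
      unfolding d_def using t_nat mu x by simp
    also have "\<dots> = Qm (Mi (Phim \<mu>)) (I.s (Phio A) (t A x))"
      by (rule I.s_nat[OF AF(1)[OF mu] tin[OF AB(1) x]])
    also have "\<dots> = Qm \<mu> (d A x)" unfolding d_def using AF(8) mu unfolding hom_def by simp
    finally show "d B (Qm \<mu> x) = Qm \<mu> (d A x)" .
  qed
  have dbij: "\<And>A. A \<in> Ob C \<Longrightarrow> C_bijection C Qo Qm A A (d A)"
  proof -
    fix A assume A: "A \<in> Ob C"
    have PA: "Phio A \<in> Ob C" using AF(4)[OF A] .
    have im: "d A ` Qo A \<subseteq> Qo A" unfolding d_def using sIin[OF A] tin[OF A] by blast
    have inj: "inj_on (d A) (Qo A)"
    proof -
      have "inj_on (I.s (Phio A) \<circ> t A) (Qo A)"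
        by (rule comp_inj_on[OF tinj[OF A]]) (rule inj_on_subset[OF I.s_inj[OF PA]], use tin[OF A] in blast)
      then show ?thesis unfolding d_def comp_def .
    qed
    have epi: "\<And>D a1 a2. a1 \<in> hom C A D \<Longrightarrow> a2 \<in> hom C A D \<Longrightarrow>
        (\<forall>x \<in> Qo A. Qm a1 (d A x) = Qm a2 (d A x)) \<Longrightarrow> a1 = a2"
    proof -
      fix D a1 a2 assume a1: "a1 \<in> hom C A D" and a2: "a2 \<in> hom C A D"
        and eq: "\<forall>x \<in> Qo A. Qm a1 (d A x) = Qm a2 (d A x)"
      have D: "D \<in> Ob C" using hom_ob[OF cat a1] by auto
      have PD: "Phio D \<in> Ob C" using AF(4)[OF D] .
      have key: "\<And>a x. a \<in> hom C A D \<Longrightarrow> x \<in> Qo A \<Longrightarrow>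
          Qm a (d A x) = I.s (Phio D) (Qm (Phim a) (t A x))"
      proof -
        fix a x assume a: "a \<in> hom C A D" and x: "x \<in> Qo A"
        have "I.s (Phio D) (Qm (Phim a) (t A x)) = Qm (Mi (Phim a)) (I.s (Phio A) (t A x))"
          by (rule I.s_nat[OF AF(1)[OF a] tin[OF A x]])
        also have "\<dots> = Qm a (d A x)" unfolding d_def using AF(8) a unfolding hom_def by simp
        finally show "Qm a (d A x) = I.s (Phio D) (Qm (Phim a) (t A x))" by simp
      qed
      have "Phim a1 = Phim a2"
      proof (rule tepi[OF A AF(1)[OF a1] AF(1)[OF a2]])
        fix x assume x: "x \<in> Qo A"
        have m1: "Qm (Phim a1) (t A x) \<in> Qo (Phio D)" by (rule P.Qimg[OF AF(1)[OF a1] tin[OF A x]])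
        have m2: "Qm (Phim a2) (t A x) \<in> Qo (Phio D)" by (rule P.Qimg[OF AF(1)[OF a2] tin[OF A x]])
        have "I.s (Phio D) (Qm (Phim a1) (t A x)) = I.s (Phio D) (Qm (Phim a2) (t A x))"
          using key[OF a1 x] key[OF a2 x] eq x by simp
        then show "Qm (Phim a1) (t A x) = Qm (Phim a2) (t A x)"
          using inj_onD[OF I.s_inj[OF PD] _ m1 m2] by blast
      qed
      then show "a1 = a2" using AF(8) a1 a2 unfolding hom_def by (metis (no_types, lifting) mem_Collect_eq)
    qed
    show "C_bijection C Qo Qm A A (d A)" unfolding C_bijection_def using im inj epi by blast
  qed
  have central: "central_function C Qo Qm d"
    unfolding central_function_def using dbij dnat by blast
  have main: "\<forall>A \<in> Ob C.
       let sP = main_fun C Qm A0 x0 Phim eta0P A;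
           sI = main_fun C Qm A0 x0 (inv_into (Mor C) Phim) eta0I (Phio A);
           c = sP \<circ> sI
       in \<forall>x \<in> Qo A. sP (d A x) \<in> c ` Qo (Phio A)
                   \<and> t A x = inv_into (Qo (Phio A)) c (sP (d A x))"
  proof (intro ballI, unfold Let_def Mi_def[symmetric])
    fix A assume A: "A \<in> Ob C"
    have PA: "Phio A \<in> Ob C" using AF(4)[OF A] .
    let ?c = "P.s A \<circ> I.s (Phio A)"
    have cinj: "inj_on ?c (Qo (Phio A))"
      by (rule comp_inj_on[OF I.s_inj[OF PA]]) (rule inj_on_subset[OF P.s_inj[OF A]], use sIin[OF A] in blast)
    show "\<forall>x \<in> Qo A. P.s A (d A x) \<in> ?c ` Qo (Phio A)
                   \<and> t A x = inv_into (Qo (Phio A)) ?c (P.s A (d A x))"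
    proof
      fix x assume x: "x \<in> Qo A"
      have e: "P.s A (d A x) = ?c (t A x)" unfolding d_def by simp
      show "P.s A (d A x) \<in> ?c ` Qo (Phio A)
                   \<and> t A x = inv_into (Qo (Phio A)) ?c (P.s A (d A x))"
        unfolding e using tin[OF A x] inv_into_f_f[OF cinj] by auto
    qed
  qed
  show ?thesis using central main by blast
qed

end
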